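(* Let $(G,Y)$ be a finite $C$-group with $Y=C_1\sqcup\dots\sqcup C_m$, and let $Y'=C_1\sqcup\dots\sqcup C_k$ be ample. Let $G'$ be the group with generators $u_y$ ($y\in Y'$) and relations $u_z^{-1}u_yu_z=u_{z^{-1}yz}$ for all $y,z\in Y'$ (where $z^{-1}yz$ is computed in $G$), and let $i_*:G'\to G$ be the homomorphism $u_y\mapsto y$. Then the restriction of $i_*$ to $[G',G']$ is an epimorphism onto $[G,G]$.
   Context: A finite $C$-group is a pair $(G,Y)$ with $Y$ a finite conjugation-invariant subset of the group $G$, $1\notin Y$, such that $G$ has a presentation with generators the elements of $Y$ and defining relations all of the form $z^{-1}yz=y'$ ($y,y',z\in Y$). $Y=C_1\sqcup\dots\sqcup C_m$ is the decomposition into conjugacy classes of $G$. A union $Y'=C_1\sqcup\dots\sqcup C_k$ of some of these classes is ample if any two elements of $Y$ that are conjugate in $G$ are conjugate by an element of the subgroup generated by $Y'$. *)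

theory Defs
  imports "HOL-Algebra.Algebra"
begin

text \<open>A word over an alphabet is a list of letters with a sign: (a, False) stands
  for the generator a, (a, True) for its inverse.\<close>

type_synonym 'a word = "('a \<times> bool) list"

inductive pres_eq :: "'a word set \<Rightarrow> 'a word \<Rightarrow> 'a word \<Rightarrow> bool" for R where
  refl: "pres_eq R w w"
| sym: "pres_eq R u v \<Longrightarrow> pres_eq R v u"
| trans: "pres_eq R u v \<Longrightarrow> pres_eq R v w \<Longrightarrow> pres_eq R u w"
| cancel: "pres_eq R (u @ [(a, b), (a, \<not> b)] @ v) (u @ v)"
| relator: "r \<in> R \<Longrightarrow> pres_eq R (u @ r @ v) (u @ v)"

definition pres_words :: "'a set \<Rightarrow> 'a word set" where
  "pres_words S = lists (S \<times> UNIV)"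

definition pres_class :: "'a set \<Rightarrow> 'a word set \<Rightarrow> 'a word \<Rightarrow> 'a word set" where
  "pres_class S R w = {v \<in> pres_words S. pres_eq R w v}"

definition presented_group :: "'a set \<Rightarrow> 'a word set \<Rightarrow> 'a word set monoid" where
  "presented_group S R =
     \<lparr> carrier = pres_class S R ` pres_words S,
       monoid.mult = (\<lambda>A B. pres_class S R ((SOME a. a \<in> A) @ (SOME b. b \<in> B))),
       one = pres_class S R [] \<rparr>"

definition pres_gen :: "'a set \<Rightarrow> 'a word set \<Rightarrow> 'a \<Rightarrow> 'a word set" where
  "pres_gen S R s = pres_class S R [(s, False)]"

definition conj_relator :: "'a \<Rightarrow> 'a \<Rightarrow> 'a \<Rightarrow> 'a word" where
  "conj_relator y z y' = [(z, True), (y, False), (z, False), (y', True)]"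

text \<open>(G,Y) is a finite C-group: Y a finite conjugation-invariant subset of G not containing 1,
  and G has a presentation with generators the elements of Y and defining relations all of
  the form z^{-1} y z = y' (y, y', z in Y); i.e. for some set T of such triples, the
  homomorphism from the presented group sending u_y to y is an isomorphism onto G.\<close>

definition finite_C_group :: "('a, 'b) monoid_scheme \<Rightarrow> 'a set \<Rightarrow> bool" where
  "finite_C_group G Y \<longleftrightarrow>
     group G \<and> finite Y \<and> Y \<subseteq> carrier G \<and> \<one>\<^bsub>G\<^esub> \<notin> Y \<and>
     (\<forall>g \<in> carrier G. \<forall>y \<in> Y. inv\<^bsub>G\<^esub> g \<otimes>\<^bsub>G\<^esub> y \<otimes>\<^bsub>G\<^esub> g \<in> Y) \<and>
     (\<exists>T \<subseteq> Y \<times> Y \<times> Y.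
        \<exists>h \<in> iso (presented_group Y ((\<lambda>(y, z, y'). conj_relator y z y') ` T)) G.
          \<forall>y \<in> Y. h (pres_gen Y ((\<lambda>(y, z, y'). conj_relator y z y') ` T) y) = y)"

definition union_of_classes :: "('a, 'b) monoid_scheme \<Rightarrow> 'a set \<Rightarrow> 'a set \<Rightarrow> bool" where
  "union_of_classes G Y Y' \<longleftrightarrow> Y' \<subseteq> Y \<and>
     (\<forall>g \<in> carrier G. \<forall>y \<in> Y'. inv\<^bsub>G\<^esub> g \<otimes>\<^bsub>G\<^esub> y \<otimes>\<^bsub>G\<^esub> g \<in> Y')"

definition ample :: "('a, 'b) monoid_scheme \<Rightarrow> 'a set \<Rightarrow> 'a set \<Rightarrow> bool" where
  "ample G Y Y' \<longleftrightarrow> union_of_classes G Y Y' \<and>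
     (\<forall>y1 \<in> Y. \<forall>y2 \<in> Y. (\<exists>g \<in> carrier G. inv\<^bsub>G\<^esub> g \<otimes>\<^bsub>G\<^esub> y1 \<otimes>\<^bsub>G\<^esub> g = y2) \<longrightarrow>
        (\<exists>g \<in> generate G Y'. inv\<^bsub>G\<^esub> g \<otimes>\<^bsub>G\<^esub> y1 \<otimes>\<^bsub>G\<^esub> g = y2))"

definition G_prime_relators :: "('a, 'b) monoid_scheme \<Rightarrow> 'a set \<Rightarrow> 'a word set" where
  "G_prime_relators G Y' =
     {conj_relator y z (inv\<^bsub>G\<^esub> z \<otimes>\<^bsub>G\<^esub> y \<otimes>\<^bsub>G\<^esub> z) | y z. y \<in> Y' \<and> z \<in> Y'}"

definition G_prime :: "('a, 'b) monoid_scheme \<Rightarrow> 'a set \<Rightarrow> 'a word set monoid" where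
  "G_prime G Y' = presented_group Y' (G_prime_relators G Y')"

end

theory Submission
  imports Defs
begin

lemma pres_eq_app: "pres_eq R u v \<Longrightarrow> pres_eq R (x @ u @ y) (x @ v @ y)"
proof (induction rule: pres_eq.induct)
  case (refl w) then show ?case by (rule pres_eq.refl)
next
  case (sym u v) then show ?case by (blast intro: pres_eq.sym)
next
  case (trans u v w) then show ?case by (metis pres_eq.trans)
next
  case (cancel u a b v)
  show ?case using pres_eq.cancel[of R "x @ u" a b "v @ y"] by simp
next
  case (relator r u v)
  show ?case using pres_eq.relator[OF relator, of "x @ u" "v @ y"] by simp
qed

lemma pres_eq_app2: "pres_eq R u u' \<Longrightarrow> pres_eq R v v' \<Longrightarrow> pres_eq R (u @ v) (u' @ v')"
proof -
  assume a: "pres_eq R u u'" "pres_eq R v v'"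
  have "pres_eq R ([] @ u @ v) ([] @ u' @ v)" by (rule pres_eq_app[OF a(1)])
  moreover have "pres_eq R (u' @ v @ []) (u' @ v' @ [])" by (rule pres_eq_app[OF a(2)])
  ultimately show ?thesis by (metis pres_eq.trans append_Nil append_Nil2)
qed

lemma pres_class_eq: "pres_eq R u v \<Longrightarrow> pres_class S R u = pres_class S R v"
  unfolding pres_class_def by (auto intro: pres_eq.trans pres_eq.sym)

lemma pres_class_self: "w \<in> pres_words S \<Longrightarrow> w \<in> pres_class S R w"
  unfolding pres_class_def by (auto intro: pres_eq.refl)

lemma pres_some: "w \<in> pres_words S \<Longrightarrow>
   (SOME a. a \<in> pres_class S R w) \<in> pres_words S \<and> pres_eq R w (SOME a. a \<in> pres_class S R w)"
proof -
  assume w: "w \<in> pres_words S"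
  hence "\<exists>a. a \<in> pres_class S R w" using pres_class_self by blast
  hence "(SOME a. a \<in> pres_class S R w) \<in> pres_class S R w" by (rule someI_ex)
  thus ?thesis unfolding pres_class_def by auto
qed

lemma pres_words_app: "u \<in> pres_words S \<Longrightarrow> v \<in> pres_words S \<Longrightarrow> u @ v \<in> pres_words S"
  unfolding pres_words_def by auto

lemma pres_mult: "u \<in> pres_words S \<Longrightarrow> v \<in> pres_words S \<Longrightarrow>
  pres_class S R u \<otimes>\<^bsub>presented_group S R\<^esub> pres_class S R v = pres_class S R (u @ v)"
proof -
  assume u: "u \<in> pres_words S" and v: "v \<in> pres_words S"
  show ?thesis unfolding presented_group_def apply simp
    apply (rule pres_class_eq)
    apply (rule pres_eq.sym)
    apply (rule pres_eq_app2)
    using pres_some[OF u, of R] pres_some[OF v, of R] by auto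
qed

definition inv_word :: "'a word \<Rightarrow> 'a word" where
  "inv_word w = rev (map (\<lambda>(a, b). (a, \<not> b)) w)"

lemma inv_word_inv: "inv_word (inv_word w) = w"
  unfolding inv_word_def by (induction w) auto

lemma inv_word_words: "w \<in> pres_words S \<Longrightarrow> inv_word w \<in> pres_words S"
  unfolding inv_word_def pres_words_def by auto

lemma inv_word_r: "pres_eq R (w @ inv_word w) []"
proof (induction w)
  case Nil then show ?case by (simp add: inv_word_def pres_eq.refl)
next
  case (Cons x w)
  obtain a b where x: "x = (a, b)" by fastforce
  have "inv_word (x # w) = inv_word w @ [(a, \<not> b)]" using x by (simp add: inv_word_def)
  hence e: "(x # w) @ inv_word (x # w) = [(a,b)] @ (w @ inv_word w) @ [(a, \<not> b)]" using x by simp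
  have "pres_eq R ([(a,b)] @ (w @ inv_word w) @ [(a, \<not> b)]) ([(a,b)] @ [] @ [(a, \<not> b)])"
    by (rule pres_eq_app[OF Cons])
  moreover have "pres_eq R ([] @ [(a,b), (a, \<not> b)] @ []) ([] @ [])" by (rule pres_eq.cancel)
  ultimately show ?case unfolding e by (auto intro: pres_eq.trans)
qed

lemma inv_word_l: "pres_eq R (inv_word w @ w) []"
  using inv_word_r[of R "inv_word w"] by (simp add: inv_word_inv)

lemma presented_group_carrier: "carrier (presented_group S R) = pres_class S R ` pres_words S"
  by (simp add: presented_group_def)

lemma presented_group_one: "\<one>\<^bsub>presented_group S R\<^esub> = pres_class S R []"
  by (simp add: presented_group_def)

lemma presented_group_is_group: "group (presented_group S R)"
proof (rule groupI)
  fix x y assume "x \<in> carrier (presented_group S R)" "y \<in> carrier (presented_group S R)"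
  then obtain u v where "u \<in> pres_words S" "v \<in> pres_words S" "x = pres_class S R u" "y = pres_class S R v"
    by (auto simp: presented_group_carrier)
  thus "x \<otimes>\<^bsub>presented_group S R\<^esub> y \<in> carrier (presented_group S R)"
    by (simp add: pres_mult pres_words_app presented_group_carrier)
next
  show "\<one>\<^bsub>presented_group S R\<^esub> \<in> carrier (presented_group S R)"
    by (auto simp: presented_group_carrier presented_group_one pres_words_def)
next
  fix x y z assume "x \<in> carrier (presented_group S R)" "y \<in> carrier (presented_group S R)"
    "z \<in> carrier (presented_group S R)"
  then obtain u v w where "u \<in> pres_words S" "v \<in> pres_words S" "w \<in> pres_words S"
     "x = pres_class S R u" "y = pres_class S R v" "z = pres_class S R w"
    by (auto simp: presented_group_carrier)
  thus "x \<otimes>\<^bsub>presented_group S R\<^esub> y \<otimes>\<^bsub>presented_group S R\<^esub> z =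
        x \<otimes>\<^bsub>presented_group S R\<^esub> (y \<otimes>\<^bsub>presented_group S R\<^esub> z)"
    by (simp add: pres_mult pres_words_app)
next
  fix x assume "x \<in> carrier (presented_group S R)"
  then obtain u where u: "u \<in> pres_words S" "x = pres_class S R u"
    by (auto simp: presented_group_carrier)
  have e: "[] \<in> pres_words S" by (simp add: pres_words_def)
  show "\<one>\<^bsub>presented_group S R\<^esub> \<otimes>\<^bsub>presented_group S R\<^esub> x = x"
    using u by (simp add: pres_mult e presented_group_one)
  show "\<exists>y\<in>carrier (presented_group S R). y \<otimes>\<^bsub>presented_group S R\<^esub> x = \<one>\<^bsub>presented_group S R\<^esub>"
  proof (intro bexI)
    show "pres_class S R (inv_word u) \<in> carrier (presented_group S R)"
      using u inv_word_words by (auto simp: presented_group_carrier)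
    show "pres_class S R (inv_word u) \<otimes>\<^bsub>presented_group S R\<^esub> x = \<one>\<^bsub>presented_group S R\<^esub>"
      using u inv_word_words[OF u(1)] pres_class_eq[OF inv_word_l[of R u], of S]
      by (simp add: pres_mult presented_group_one)
  qed
qed

lemma presented_group_generate:
  "carrier (presented_group S R) = generate (presented_group S R) (pres_gen S R ` S)"
proof -
  interpret P: group "presented_group S R" by (rule presented_group_is_group)
  have gsub: "pres_gen S R ` S \<subseteq> carrier (presented_group S R)"
  proof
    fix g assume "g \<in> pres_gen S R ` S"
    then obtain s where s: "s \<in> S" "g = pres_gen S R s" by blast
    have "[(s, False)] \<in> pres_words S" using s by (simp add: pres_words_def)
    thus "g \<in> carrier (presented_group S R)" unfolding s(2) pres_gen_def presented_group_carrier
      by (rule imageI)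
  qed
  have main: "pres_class S R w \<in> generate (presented_group S R) (pres_gen S R ` S)" if "w \<in> pres_words S" for w
    using that
  proof (induction w)
    case Nil then show ?case
      using generate.one[of "presented_group S R" "pres_gen S R ` S"] by (simp add: presented_group_one)
  next
    case (Cons x w)
    obtain s b where x: "x = (s, b)" by fastforce
    have s: "s \<in> S" using Cons.prems x by (simp add: pres_words_def)
    have w: "w \<in> pres_words S" using Cons.prems by (simp add: pres_words_def)
    have xw: "[x] \<in> pres_words S" using Cons.prems by (simp add: pres_words_def)
    have e: "pres_class S R (x # w) = pres_class S R [x] \<otimes>\<^bsub>presented_group S R\<^esub> pres_class S R w"
      using pres_mult[OF xw w, of R] by simp
    have gs: "pres_gen S R s \<in> generate (presented_group S R) (pres_gen S R ` S)"
      using s by (intro generate.incl imageI)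
    have g: "pres_class S R [x] \<in> generate (presented_group S R) (pres_gen S R ` S)"
    proof (cases b)
      case False
      hence "pres_class S R [x] = pres_gen S R s" by (simp add: x pres_gen_def)
      then show ?thesis using gs by simp
    next
      case True
      have w1: "[(s,True)] \<in> pres_words S" "[(s,False)] \<in> pres_words S" using s by (auto simp: pres_words_def)
      have "pres_class S R [(s,True)] \<otimes>\<^bsub>presented_group S R\<^esub> pres_class S R [(s,False)] = \<one>\<^bsub>presented_group S R\<^esub>"
        using pres_mult[OF w1, of R] pres_class_eq[OF pres_eq.cancel[of R "[]" s True "[]"], of S]
        by (simp add: presented_group_one)
      moreover have "pres_class S R [(s,True)] \<in> carrier (presented_group S R)"
        unfolding presented_group_carrier using w1(1) by (rule imageI)
      moreover have "pres_gen S R s \<in> carrier (presented_group S R)" using gsub s by blast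
      ultimately have "inv\<^bsub>presented_group S R\<^esub> (pres_gen S R s) = pres_class S R [(s,True)]"
        unfolding pres_gen_def by (intro P.inv_equality) (simp_all add: pres_gen_def)
      moreover have "inv\<^bsub>presented_group S R\<^esub> (pres_gen S R s) \<in> generate (presented_group S R) (pres_gen S R ` S)"
        using s by (intro generate.inv imageI)
      ultimately show ?thesis using True x by simp
    qed
    show ?case unfolding e by (rule generate.eng[OF g Cons.IH[OF w]])
  qed
  show ?thesis
  proof
    show "carrier (presented_group S R) \<subseteq> generate (presented_group S R) (pres_gen S R ` S)"
      unfolding presented_group_carrier using main by blast
    show "generate (presented_group S R) (pres_gen S R ` S) \<subseteq> carrier (presented_group S R)"
      by (rule P.generate_incl[OF gsub])
  qed
qed


context group
begin

lemma inv_cancel_l: "x \<in> carrier G \<Longrightarrow> y \<in> carrier G \<Longrightarrow> inv x \<otimes> (x \<otimes> y) = y"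
  by (simp add: m_assoc[symmetric])

lemma inv_cancel_r: "x \<in> carrier G \<Longrightarrow> y \<in> carrier G \<Longrightarrow> x \<otimes> (inv x \<otimes> y) = y"
  by (simp add: m_assoc[symmetric])

lemma comm_mult:
  assumes N: "N \<lhd> G" and c: "x \<in> carrier G" "y1 \<in> carrier G" "y2 \<in> carrier G"
    and h1: "x \<otimes> y1 \<otimes> inv x \<otimes> inv y1 \<in> N" and h2: "x \<otimes> y2 \<otimes> inv x \<otimes> inv y2 \<in> N"
  shows "x \<otimes> (y1 \<otimes> y2) \<otimes> inv x \<otimes> inv (y1 \<otimes> y2) \<in> N"
proof -
  interpret N: normal N G by (rule N)
  have "y1 \<otimes> (x \<otimes> y2 \<otimes> inv x \<otimes> inv y2) \<otimes> inv y1 \<in> N"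
    using h2 c by (intro N.inv_op_closed2) auto
  hence "(x \<otimes> y1 \<otimes> inv x \<otimes> inv y1) \<otimes> (y1 \<otimes> (x \<otimes> y2 \<otimes> inv x \<otimes> inv y2) \<otimes> inv y1) \<in> N"
    using h1 by (rule N.m_closed[rotated])
  moreover have "(x \<otimes> y1 \<otimes> inv x \<otimes> inv y1) \<otimes> (y1 \<otimes> (x \<otimes> y2 \<otimes> inv x \<otimes> inv y2) \<otimes> inv y1)
     = x \<otimes> (y1 \<otimes> y2) \<otimes> inv x \<otimes> inv (y1 \<otimes> y2)"
    using c by (simp add: m_assoc inv_mult_group inv_cancel_l inv_cancel_r)
  ultimately show ?thesis by simp
qed

lemma comm_sym:
  assumes N: "N \<lhd> G" and c: "x \<in> carrier G" "y \<in> carrier G"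
    and h: "x \<otimes> y \<otimes> inv x \<otimes> inv y \<in> N"
  shows "y \<otimes> x \<otimes> inv y \<otimes> inv x \<in> N"
proof -
  interpret N: normal N G by (rule N)
  have "inv (x \<otimes> y \<otimes> inv x \<otimes> inv y) \<in> N" using h by (rule N.m_inv_closed)
  moreover have "inv (x \<otimes> y \<otimes> inv x \<otimes> inv y) = y \<otimes> x \<otimes> inv y \<otimes> inv x"
    using c by (simp add: m_assoc inv_mult_group)
  ultimately show ?thesis by simp
qed

lemma comm_inv:
  assumes N: "N \<lhd> G" and c: "x \<in> carrier G" "y \<in> carrier G"
    and h: "x \<otimes> y \<otimes> inv x \<otimes> inv y \<in> N"
  shows "x \<otimes> inv y \<otimes> inv x \<otimes> inv (inv y) \<in> N"
proof -
  interpret N: normal N G by (rule N)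
  have "inv y \<otimes> (y \<otimes> x \<otimes> inv y \<otimes> inv x) \<otimes> inv (inv y) \<in> N"
    using comm_sym[OF N c h] c by (intro N.inv_op_closed2) auto
  moreover have "inv y \<otimes> (y \<otimes> x \<otimes> inv y \<otimes> inv x) \<otimes> inv (inv y) = x \<otimes> inv y \<otimes> inv x \<otimes> inv (inv y)"
    using c by (simp add: m_assoc inv_cancel_l)
  ultimately show ?thesis by simp
qed

lemma comm_generate:
  assumes N: "N \<lhd> G" and x: "x \<in> carrier G" and A: "A \<subseteq> carrier G"
    and h: "\<And>a. a \<in> A \<Longrightarrow> x \<otimes> a \<otimes> inv x \<otimes> inv a \<in> N"
    and y: "y \<in> generate G A"
  shows "x \<otimes> y \<otimes> inv x \<otimes> inv y \<in> N"
  using y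
proof (induction rule: generate.induct)
  case one
  interpret N: normal N G by (rule N)
  show ?case using x by simp
next
  case (incl a) then show ?case by (rule h)
next
  case (inv a)
  then show ?case using comm_inv[OF N x _ h[OF inv]] A by auto
next
  case (eng h1 h2)
  then show ?case using comm_mult[OF N x _ _ eng.IH] generate_in_carrier[OF A] by auto
qed

end


theorem proposition2p19:
  fixes G :: "('a, 'b) monoid_scheme" and Y Y' :: "'a set" and i :: "'a word set \<Rightarrow> 'a"
  assumes "finite_C_group G Y"
    and "ample G Y Y'"
    and "i \<in> hom (G_prime G Y') G"
    and "\<forall>y \<in> Y'. i (pres_gen Y' (G_prime_relators G Y') y) = y"
  shows "i ` derived (G_prime G Y') (carrier (G_prime G Y')) = derived G (carrier G)"
proof -
  have grp: "group G" and Yc: "Y \<subseteq> carrier G"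
    and Yconj: "\<forall>g \<in> carrier G. \<forall>y \<in> Y. inv\<^bsub>G\<^esub> g \<otimes>\<^bsub>G\<^esub> y \<otimes>\<^bsub>G\<^esub> g \<in> Y"
    using assms(1) unfolding finite_C_group_def by auto
  interpret G: group G by (rule grp)
  obtain T where "T \<subseteq> Y \<times> Y \<times> Y" and
    "\<exists>h \<in> iso (presented_group Y ((\<lambda>(y, z, y'). conj_relator y z y') ` T)) G.
          \<forall>y \<in> Y. h (pres_gen Y ((\<lambda>(y, z, y'). conj_relator y z y') ` T) y) = y"
    using assms(1) unfolding finite_C_group_def by blast
  then obtain h where hiso: "h \<in> iso (presented_group Y ((\<lambda>(y, z, y'). conj_relator y z y') ` T)) G"
    and hgen: "\<forall>y \<in> Y. h (pres_gen Y ((\<lambda>(y, z, y'). conj_relator y z y') ` T) y) = y" by blast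
  define RT where "RT = (\<lambda>(y, z, y'). conj_relator y z y') ` T"
  define P where "P = presented_group Y RT"
  interpret P: group P unfolding P_def by (rule presented_group_is_group)
  have hh: "group_hom P G h"
    using hiso unfolding P_def RT_def by (intro group_hom.intro group_hom_axioms.intro presented_group_is_group grp) (auto simp: iso_def)
  have "carrier G = h ` carrier P"
    using hiso unfolding P_def RT_def iso_def bij_betw_def by auto
  also have "\<dots> = h ` generate P (pres_gen Y RT ` Y)"
    unfolding P_def using presented_group_generate by metis
  also have "\<dots> = generate G (h ` pres_gen Y RT ` Y)"
    by (rule group_hom.generate_img[OF hh, symmetric])
       (auto simp: P_def presented_group_carrier pres_gen_def pres_words_def)
  also have "h ` pres_gen Y RT ` Y = Y" using hgen unfolding RT_def by force
  finally have GY: "carrier G = generate G Y" .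

  have amp: "union_of_classes G Y Y'" and
    amp2: "\<forall>y1 \<in> Y. \<forall>y2 \<in> Y. (\<exists>g \<in> carrier G. inv\<^bsub>G\<^esub> g \<otimes>\<^bsub>G\<^esub> y1 \<otimes>\<^bsub>G\<^esub> g = y2) \<longrightarrow>
        (\<exists>g \<in> generate G Y'. inv\<^bsub>G\<^esub> g \<otimes>\<^bsub>G\<^esub> y1 \<otimes>\<^bsub>G\<^esub> g = y2)"
    using assms(2) unfolding ample_def by auto
  have Y'Y: "Y' \<subseteq> Y" and Y'conj: "\<forall>g \<in> carrier G. \<forall>y \<in> Y'. inv\<^bsub>G\<^esub> g \<otimes>\<^bsub>G\<^esub> y \<otimes>\<^bsub>G\<^esub> g \<in> Y'"
    using amp unfolding union_of_classes_def by auto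
  have Y'c: "Y' \<subseteq> carrier G" using Y'Y Yc by auto

  define R' where "R' = G_prime_relators G Y'"
  define P' where "P' = G_prime G Y'"
  have P'_def2: "P' = presented_group Y' R'" unfolding P'_def R'_def G_prime_def by simp
  interpret P': group P' unfolding P'_def2 by (rule presented_group_is_group)
  have ih: "group_hom P' G i"
    using assms(3) P'.is_group unfolding P'_def by (intro group_hom.intro group_hom_axioms.intro grp) auto
  have "i ` carrier P' = i ` generate P' (pres_gen Y' R' ` Y')"
    unfolding P'_def2 using presented_group_generate by metis
  also have "\<dots> = generate G (i ` pres_gen Y' R' ` Y')"
    by (rule group_hom.generate_img[OF ih, symmetric])
       (auto simp: P'_def2 presented_group_carrier pres_gen_def pres_words_def)
  also have "i ` pres_gen Y' R' ` Y' = Y'" using assms(4) unfolding R'_def by force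
  finally have iP': "i ` carrier P' = generate G Y'" .

  define H where "H = generate G Y'"
  have Hsub: "subgroup H G" unfolding H_def by (rule G.generate_is_subgroup[OF Y'c])
  have Hn: "H \<lhd> G" unfolding H_def
  proof (rule G.normal_generateI[OF Y'c])
    fix y g assume y: "y \<in> Y'" and g: "g \<in> carrier G"
    have "inv\<^bsub>G\<^esub> (inv\<^bsub>G\<^esub> g) \<otimes>\<^bsub>G\<^esub> y \<otimes>\<^bsub>G\<^esub> inv\<^bsub>G\<^esub> g \<in> Y'"
      using Y'conj y G.inv_closed[OF g] by blast
    thus "g \<otimes>\<^bsub>G\<^esub> y \<otimes>\<^bsub>G\<^esub> inv\<^bsub>G\<^esub> g \<in> Y'" using g by simp
  qed
  define N where "N = derived G H"
  have Nn: "N \<lhd> G" unfolding N_def by (rule G.derived_is_normal[OF Hn])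
  have dsN: "h1 \<otimes>\<^bsub>G\<^esub> h2 \<otimes>\<^bsub>G\<^esub> inv\<^bsub>G\<^esub> h1 \<otimes>\<^bsub>G\<^esub> inv\<^bsub>G\<^esub> h2 \<in> N" if "h1 \<in> H" "h2 \<in> H" for h1 h2
    unfolding N_def derived_def using that by (intro generate.incl) blast
  have Hc: "H \<subseteq> carrier G" using Hsub by (rule subgroup.subset)

  have s1: "a \<otimes>\<^bsub>G\<^esub> y \<otimes>\<^bsub>G\<^esub> inv\<^bsub>G\<^esub> a \<otimes>\<^bsub>G\<^esub> inv\<^bsub>G\<^esub> y \<in> N"
    if a: "a \<in> carrier G" and y: "y \<in> Y'" for a y
  proof -
    have yc: "y \<in> carrier G" using y Y'c by auto
    have y'Y: "a \<otimes>\<^bsub>G\<^esub> y \<otimes>\<^bsub>G\<^esub> inv\<^bsub>G\<^esub> a \<in> Y'"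
      using Y'conj y a G.inv_closed[OF a] by (metis G.inv_inv)
    have "\<exists>g \<in> carrier G. inv\<^bsub>G\<^esub> g \<otimes>\<^bsub>G\<^esub> y \<otimes>\<^bsub>G\<^esub> g = a \<otimes>\<^bsub>G\<^esub> y \<otimes>\<^bsub>G\<^esub> inv\<^bsub>G\<^esub> a"
      using a by (intro bexI[of _ "inv\<^bsub>G\<^esub> a"]) auto
    then obtain k where k: "k \<in> H" "inv\<^bsub>G\<^esub> k \<otimes>\<^bsub>G\<^esub> y \<otimes>\<^bsub>G\<^esub> k = a \<otimes>\<^bsub>G\<^esub> y \<otimes>\<^bsub>G\<^esub> inv\<^bsub>G\<^esub> a"
      using amp2 y y'Y Y'Y unfolding H_def by blast
    have kc: "k \<in> carrier G" using k Hc by auto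
    have "inv\<^bsub>G\<^esub> k \<in> H" using k Hsub by (simp add: subgroup.m_inv_closed)
    moreover have "y \<in> H" using y unfolding H_def by (rule generate.incl)
    ultimately have "inv\<^bsub>G\<^esub> k \<otimes>\<^bsub>G\<^esub> y \<otimes>\<^bsub>G\<^esub> inv\<^bsub>G\<^esub> (inv\<^bsub>G\<^esub> k) \<otimes>\<^bsub>G\<^esub> inv\<^bsub>G\<^esub> y \<in> N"
      by (rule dsN)
    thus ?thesis using k(2) kc by simp
  qed
  have s2: "a \<otimes>\<^bsub>G\<^esub> k \<otimes>\<^bsub>G\<^esub> inv\<^bsub>G\<^esub> a \<otimes>\<^bsub>G\<^esub> inv\<^bsub>G\<^esub> k \<in> N"
    if a: "a \<in> carrier G" and k: "k \<in> H" for a k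
    using G.comm_generate[OF Nn a Y'c s1[OF a] k[unfolded H_def]] .
  have s3: "a \<otimes>\<^bsub>G\<^esub> b \<otimes>\<^bsub>G\<^esub> inv\<^bsub>G\<^esub> a \<otimes>\<^bsub>G\<^esub> inv\<^bsub>G\<^esub> b \<in> N"
    if a: "a \<in> Y" and b: "b \<in> Y" for a b
  proof -
    have ac: "a \<in> carrier G" and bc: "b \<in> carrier G" using a b Yc by auto
    have a''Y: "b \<otimes>\<^bsub>G\<^esub> a \<otimes>\<^bsub>G\<^esub> inv\<^bsub>G\<^esub> b \<in> Y"
      using Yconj a bc G.inv_closed[OF bc] by (metis G.inv_inv)
    have "\<exists>g \<in> carrier G. inv\<^bsub>G\<^esub> g \<otimes>\<^bsub>G\<^esub> a \<otimes>\<^bsub>G\<^esub> g = b \<otimes>\<^bsub>G\<^esub> a \<otimes>\<^bsub>G\<^esub> inv\<^bsub>G\<^esub> b"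
      using bc by (intro bexI[of _ "inv\<^bsub>G\<^esub> b"]) auto
    then obtain k where k: "k \<in> H" "inv\<^bsub>G\<^esub> k \<otimes>\<^bsub>G\<^esub> a \<otimes>\<^bsub>G\<^esub> k = b \<otimes>\<^bsub>G\<^esub> a \<otimes>\<^bsub>G\<^esub> inv\<^bsub>G\<^esub> b"
      using amp2 a a''Y unfolding H_def by blast
    have kc: "k \<in> carrier G" using k Hc by auto
    have "inv\<^bsub>G\<^esub> k \<in> H" using k Hsub by (simp add: subgroup.m_inv_closed)
    hence "a \<otimes>\<^bsub>G\<^esub> inv\<^bsub>G\<^esub> k \<otimes>\<^bsub>G\<^esub> inv\<^bsub>G\<^esub> a \<otimes>\<^bsub>G\<^esub> inv\<^bsub>G\<^esub> (inv\<^bsub>G\<^esub> k) \<in> N"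
      by (rule s2[OF ac])
    moreover have "a \<otimes>\<^bsub>G\<^esub> inv\<^bsub>G\<^esub> k \<otimes>\<^bsub>G\<^esub> inv\<^bsub>G\<^esub> a \<otimes>\<^bsub>G\<^esub> inv\<^bsub>G\<^esub> (inv\<^bsub>G\<^esub> k)
        = a \<otimes>\<^bsub>G\<^esub> inv\<^bsub>G\<^esub> (inv\<^bsub>G\<^esub> k \<otimes>\<^bsub>G\<^esub> a \<otimes>\<^bsub>G\<^esub> k)"
      using ac kc by (simp add: G.m_assoc G.inv_mult_group)
    moreover have "a \<otimes>\<^bsub>G\<^esub> inv\<^bsub>G\<^esub> (b \<otimes>\<^bsub>G\<^esub> a \<otimes>\<^bsub>G\<^esub> inv\<^bsub>G\<^esub> b)
        = a \<otimes>\<^bsub>G\<^esub> b \<otimes>\<^bsub>G\<^esub> inv\<^bsub>G\<^esub> a \<otimes>\<^bsub>G\<^esub> inv\<^bsub>G\<^esub> b"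
      using ac bc by (simp add: G.m_assoc G.inv_mult_group)
    ultimately show ?thesis using k(2) by simp
  qed
  have s4: "a \<otimes>\<^bsub>G\<^esub> b \<otimes>\<^bsub>G\<^esub> inv\<^bsub>G\<^esub> a \<otimes>\<^bsub>G\<^esub> inv\<^bsub>G\<^esub> b \<in> N"
    if a: "a \<in> Y" and b: "b \<in> carrier G" for a b
    using G.comm_generate[OF Nn _ Yc s3[OF a] b[unfolded GY]] a Yc by auto
  have s5: "a \<otimes>\<^bsub>G\<^esub> b \<otimes>\<^bsub>G\<^esub> inv\<^bsub>G\<^esub> a \<otimes>\<^bsub>G\<^esub> inv\<^bsub>G\<^esub> b \<in> N"
    if a: "a \<in> carrier G" and b: "b \<in> carrier G" for a b
  proof -
    have "\<And>y. y \<in> Y \<Longrightarrow> a \<otimes>\<^bsub>G\<^esub> y \<otimes>\<^bsub>G\<^esub> inv\<^bsub>G\<^esub> a \<otimes>\<^bsub>G\<^esub> inv\<^bsub>G\<^esub> y \<in> N"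
    proof -
      fix y assume y: "y \<in> Y"
      hence yc: "y \<in> carrier G" using Yc by blast
      show "a \<otimes>\<^bsub>G\<^esub> y \<otimes>\<^bsub>G\<^esub> inv\<^bsub>G\<^esub> a \<otimes>\<^bsub>G\<^esub> inv\<^bsub>G\<^esub> y \<in> N"
        by (rule G.comm_sym[OF Nn yc a s4[OF y a]])
    qed
    thus ?thesis by (rule G.comm_generate[OF Nn a Yc _ b[unfolded GY]])
  qed
  have "derived G (carrier G) \<subseteq> N"
    unfolding derived_def
    by (rule G.generate_subgroup_incl[OF _ normal.axioms(1)[OF Nn]]) (use s5 in blast)
  moreover have "N \<subseteq> derived G (carrier G)" unfolding N_def by (rule G.mono_derived[OF Hc])
  ultimately have "derived G (carrier G) = N" by blast
  moreover have "i ` derived P' (carrier P') = derived G H"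
    using group_hom.derived_img[OF ih, of "carrier P'"] iP' unfolding H_def by simp
  ultimately show ?thesis unfolding P'_def N_def by simp
qed

end
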